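(* Let $n\ge 3$ and $m\ge 2$ be integers, and let $F$, $R$ be as in the context. In the group $F/[R,F]$ the following hold: (1) for $1\le i<j-1\le n-2$, the order of $[s_i,s_j]$ divides $m$; (2) for $1\le i\le n-2$, the order of $[s_i,s_{i+1},s_i]$ divides $m$, and the order of $[s_i,s_{i+1},s_is_{i+1}^{-1}]$ divides $\gcd\!\big(m,\binom{m}{2}\big)$; (3) for $1\le i\le n-3$, the order of $[[s_i,s_{i+1}],[s_{i+1},s_{i+2}]]$ divides $\gcd(2,m)$.
   Context: Commutator conventions: $[a,b]=a^{-1}b^{-1}ab$, $a^b=b^{-1}ab$, and commutators are left-normed: $[a_1,\dots,a_k]=[[a_1,\dots,a_{k-1}],a_k]$. Let $F$ be the free group on $s_1,\dots,s_{n-1}$ and let $R$ be the normal closure in $F$ of the following relators: $s_i^m$ ($1\le i\le n-1$); $[s_i,s_j]$ ($1\le i<j-1\le n-2$); $[s_i,s_{i+1},s_i]$ and $[s_i,s_{i+1},s_{i+1}]$ ($1\le i\le n-2$); $[[s_i,s_{i+1}],[s_{i+1},s_{i+2}]]$ ($1\le i\le n-3$). It is known that $F/R\cong \mathrm{UT}_n(\mathbb Z/m\mathbb Z)$ (the group of upper unitriangular $n\times n$ matrices over $\mathbb Z/m\mathbb Z$) via $s_i\mapsto I+E_{i,i+1}$. *)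

theory Defs
  imports "HOL-Algebra.Algebra"
begin

text \<open>Free group on generators s_1,...,s_(n-1), realised as reduced words.
  A letter (i, True) stands for s_i and (i, False) for s_i^-1.\<close>

type_synonym letter = "nat \<times> bool"

definition inverse_letters :: "letter \<Rightarrow> letter \<Rightarrow> bool" where
  "inverse_letters x y \<longleftrightarrow> fst x = fst y \<and> snd x \<noteq> snd y"

definition reduced :: "letter list \<Rightarrow> bool" where
  "reduced w \<longleftrightarrow> (\<forall>k. Suc k < length w \<longrightarrow> \<not> inverse_letters (w ! k) (w ! Suc k))"

definition push_letter :: "letter \<Rightarrow> letter list \<Rightarrow> letter list" where
  "push_letter x ys = (case ys of [] \<Rightarrow> [x]
                        | y # ys' \<Rightarrow> (if inverse_letters x y then ys' else x # y # ys'))"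

definition normalize :: "letter list \<Rightarrow> letter list" where
  "normalize w = foldr push_letter w []"

definition free_grp :: "nat \<Rightarrow> letter list monoid" where
  "free_grp n = \<lparr>carrier = {w. reduced w \<and> (\<forall>x\<in>set w. 1 \<le> fst x \<and> fst x \<le> n - 1)},
                 monoid.mult = (\<lambda>u v. normalize (u @ v)),
                 one = []\<rparr>"

definition gen :: "nat \<Rightarrow> letter list" where
  "gen i = [(i, True)]"

text \<open>Commutator convention [a,b] = a^-1 b^-1 a b.\<close>
definition comm :: "('a, 'b) monoid_scheme \<Rightarrow> 'a \<Rightarrow> 'a \<Rightarrow> 'a" where
  "comm G a b = inv\<^bsub>G\<^esub> a \<otimes>\<^bsub>G\<^esub> inv\<^bsub>G\<^esub> b \<otimes>\<^bsub>G\<^esub> a \<otimes>\<^bsub>G\<^esub> b"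

definition normal_closure :: "('a, 'b) monoid_scheme \<Rightarrow> 'a set \<Rightarrow> 'a set" where
  "normal_closure G S = generate G {g \<otimes>\<^bsub>G\<^esub> r \<otimes>\<^bsub>G\<^esub> inv\<^bsub>G\<^esub> g | g r. g \<in> carrier G \<and> r \<in> S}"

definition comm_subgroup :: "('a, 'b) monoid_scheme \<Rightarrow> 'a set \<Rightarrow> 'a set \<Rightarrow> 'a set" where
  "comm_subgroup G A B = generate G {comm G a b | a b. a \<in> A \<and> b \<in> B}"

definition UT_relators :: "nat \<Rightarrow> nat \<Rightarrow> letter list set" where
  "UT_relators n m =
     {gen i [^]\<^bsub>free_grp n\<^esub> m | i. 1 \<le> i \<and> i \<le> n - 1}
   \<union> {comm (free_grp n) (gen i) (gen j) | i j. 1 \<le> i \<and> i < j - 1 \<and> j - 1 \<le> n - 2}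
   \<union> {comm (free_grp n) (comm (free_grp n) (gen i) (gen (i+1))) (gen i) | i. 1 \<le> i \<and> i \<le> n - 2}
   \<union> {comm (free_grp n) (comm (free_grp n) (gen i) (gen (i+1))) (gen (i+1)) | i. 1 \<le> i \<and> i \<le> n - 2}
   \<union> {comm (free_grp n) (comm (free_grp n) (gen i) (gen (i+1)))
                          (comm (free_grp n) (gen (i+1)) (gen (i+2))) | i. 1 \<le> i \<and> i \<le> n - 3}"

definition UT_R :: "nat \<Rightarrow> nat \<Rightarrow> letter list set" where
  "UT_R n m = normal_closure (free_grp n) (UT_relators n m)"

definition RF :: "nat \<Rightarrow> nat \<Rightarrow> letter list set" where
  "RF n m = comm_subgroup (free_grp n) (UT_R n m) (carrier (free_grp n))"

definition Q :: "nat \<Rightarrow> nat \<Rightarrow> letter list set monoid" where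
  "Q n m = free_grp n Mod RF n m"

definition proj :: "nat \<Rightarrow> nat \<Rightarrow> letter list \<Rightarrow> letter list set" where
  "proj n m g = RF n m #>\<^bsub>free_grp n\<^esub> g"

end

theory Submission
  imports Defs
begin

definition flip :: "letter \<Rightarrow> letter" where "flip x = (fst x, \<not> snd x)"

lemma inv_letters_flip: "inverse_letters x y \<longleftrightarrow> y = flip x"
  by (cases x; cases y) (auto simp: inverse_letters_def flip_def)

lemma reduced_Nil[simp]: "reduced []" by (simp add: reduced_def)

lemma reduced_Cons: "reduced (x # ys) \<longleftrightarrow> reduced ys \<and> (ys = [] \<or> \<not> inverse_letters x (hd ys))"
proof
  assume r: "reduced (x # ys)"
  have "reduced ys" unfolding reduced_def
  proof (intro allI impI)
    fix k assume "Suc k < length ys"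
    then show "\<not> inverse_letters (ys ! k) (ys ! Suc k)"
      using r[unfolded reduced_def, rule_format, of "Suc k"] by simp
  qed
  moreover have "ys = [] \<or> \<not> inverse_letters x (hd ys)"
    using r[unfolded reduced_def, rule_format, of 0] by (cases ys) auto
  ultimately show "reduced ys \<and> (ys = [] \<or> \<not> inverse_letters x (hd ys))" by blast
next
  assume a: "reduced ys \<and> (ys = [] \<or> \<not> inverse_letters x (hd ys))"
  show "reduced (x # ys)" unfolding reduced_def
  proof (intro allI impI)
    fix k assume k: "Suc k < length (x # ys)"
    show "\<not> inverse_letters ((x # ys) ! k) ((x # ys) ! Suc k)"
    proof (cases k)
      case 0 then show ?thesis using a k by (cases ys) auto
    next
      case (Suc k') then show ?thesis using a k unfolding reduced_def by auto
    qed
  qed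
qed

lemma reduced_push: "reduced ys \<Longrightarrow> reduced (push_letter x ys)"
  by (cases ys) (auto simp: push_letter_def reduced_Cons)

lemma push_cancel: "reduced ys \<Longrightarrow> push_letter (flip x) (push_letter x ys) = ys"
proof (cases ys)
  case Nil then show ?thesis by (simp add: push_letter_def inv_letters_flip flip_def)
next
  case (Cons y ys')
  assume r: "reduced ys"
  show ?thesis
  proof (cases "inverse_letters x y")
    case True
    then have y: "y = flip x" by (simp add: inv_letters_flip)
    show ?thesis
    proof (cases ys')
      case Nil then show ?thesis using Cons True y by (simp add: push_letter_def)
    next
      case (Cons z zs)
      then show ?thesis using \<open>ys = y # ys'\<close> True y r
        by (auto simp: push_letter_def reduced_Cons)
    qed
  next
    case False
    then show ?thesis using Cons
      by (auto simp: push_letter_def inv_letters_flip flip_def)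
  qed
qed

lemma reduced_normalize: "reduced (normalize w)"
  by (induction w) (auto simp: normalize_def reduced_push)

lemma normalize_Cons: "normalize (x # w) = push_letter x (normalize w)"
  by (simp add: normalize_def)

lemma normalize_reduced: "reduced w \<Longrightarrow> normalize w = w"
proof (induction w)
  case Nil then show ?case by (simp add: normalize_def)
next
  case (Cons x w)
  then have "reduced w" by (simp add: reduced_Cons)
  with Cons show ?case
    by (cases w) (auto simp: normalize_Cons push_letter_def reduced_Cons)
qed

lemma foldr_push_reduced: "reduced z \<Longrightarrow> reduced (foldr push_letter xs z)"
  by (induction xs) (auto simp: reduced_push)

lemma foldr_push_push:
  assumes "reduced w" "reduced z"
  shows "foldr push_letter (push_letter x w) z = push_letter x (foldr push_letter w z)"
proof (cases w)
  case Nil then show ?thesis by (simp add: push_letter_def)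
next
  case (Cons y w')
  show ?thesis
  proof (cases "inverse_letters x y")
    case True
    then have "x = flip y" by (cases x; cases y) (auto simp: inverse_letters_def flip_def)
    moreover have "reduced (foldr push_letter w' z)"
      using assms by (intro foldr_push_reduced)
    have "push_letter x w = w'" using Cons True by (simp add: push_letter_def)
    moreover have "foldr push_letter w z = push_letter y (foldr push_letter w' z)" using Cons by simp
    ultimately show ?thesis using push_cancel[OF \<open>reduced (foldr push_letter w' z)\<close>, of y] \<open>x = flip y\<close>
      by simp
  next
    case False then show ?thesis using Cons by (simp add: push_letter_def)
  qed
qed

lemma foldr_normalize: "reduced z \<Longrightarrow> foldr push_letter xs z = foldr push_letter (normalize xs) z"
proof (induction xs)
  case Nil then show ?case by (simp add: normalize_def)
next
  case (Cons x xs)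
  then show ?case
    by (simp add: normalize_Cons foldr_push_push reduced_normalize)
qed

lemma normalize_append: "normalize (xs @ ys) = foldr push_letter xs (normalize ys)"
  by (simp add: normalize_def)

lemma set_push: "set (push_letter x ys) \<subseteq> insert x (set ys)"
  by (cases ys) (auto simp: push_letter_def)

lemma set_normalize: "set (normalize w) \<subseteq> set w"
  by (induction w) (use set_push in \<open>fastforce simp: normalize_def\<close>)+

lemma foldr_inverse: "reduced w \<Longrightarrow> foldr push_letter (rev (map flip w)) w = []"
proof (induction w)
  case Nil then show ?case by simp
next
  case (Cons a w)
  then have "reduced w" by (simp add: reduced_Cons)
  have "push_letter (flip a) (a # w) = w"
    by (simp add: push_letter_def inv_letters_flip flip_def)
  then show ?case using Cons \<open>reduced w\<close> by simp
qed

lemma free_grp_group: "group (free_grp n)"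
proof (rule groupI)
  let ?G = "free_grp n"
  fix x y assume "x \<in> carrier ?G" "y \<in> carrier ?G"
  then show "x \<otimes>\<^bsub>?G\<^esub> y \<in> carrier ?G"
    using set_normalize[of "x @ y"] by (auto simp: free_grp_def reduced_normalize)
next
  show "\<one>\<^bsub>free_grp n\<^esub> \<in> carrier (free_grp n)" by (simp add: free_grp_def)
next
  fix x y z assume xyz: "x \<in> carrier (free_grp n)" "y \<in> carrier (free_grp n)" "z \<in> carrier (free_grp n)"
  have "normalize (normalize (x @ y) @ z) = foldr push_letter (normalize (x @ y)) (normalize z)"
    by (rule normalize_append)
  also have "\<dots> = foldr push_letter (x @ y) (normalize z)"
    by (rule foldr_normalize[symmetric]) (rule reduced_normalize)
  also have "\<dots> = normalize (x @ y @ z)" by (simp add: normalize_append)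
  finally have "normalize (normalize (x @ y) @ z) = normalize (x @ y @ z)" .
  moreover have "normalize (x @ normalize (y @ z)) = normalize (x @ y @ z)"
    by (simp add: normalize_append normalize_reduced[OF foldr_push_reduced[OF reduced_normalize]] del: foldr_append)
  ultimately show "x \<otimes>\<^bsub>free_grp n\<^esub> y \<otimes>\<^bsub>free_grp n\<^esub> z = x \<otimes>\<^bsub>free_grp n\<^esub> (y \<otimes>\<^bsub>free_grp n\<^esub> z)"
    by (simp add: free_grp_def)
next
  fix x assume "x \<in> carrier (free_grp n)"
  then show "\<one>\<^bsub>free_grp n\<^esub> \<otimes>\<^bsub>free_grp n\<^esub> x = x"
    by (simp add: free_grp_def normalize_reduced)
next
  fix x assume x: "x \<in> carrier (free_grp n)"
  let ?y = "normalize (rev (map flip x))"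
  have "?y \<in> carrier (free_grp n)"
    using x set_normalize[of "rev (map flip x)"]
    by (force simp: free_grp_def reduced_normalize flip_def)
  moreover have "?y \<otimes>\<^bsub>free_grp n\<^esub> x = \<one>\<^bsub>free_grp n\<^esub>"
    using x by (simp add: free_grp_def normalize_append foldr_normalize[symmetric] normalize_reduced foldr_inverse)
  ultimately show "\<exists>y\<in>carrier (free_grp n). y \<otimes>\<^bsub>free_grp n\<^esub> x = \<one>\<^bsub>free_grp n\<^esub>" by blast
qed

lemma gen_carrier: "1 \<le> i \<Longrightarrow> i \<le> n - 1 \<Longrightarrow> gen i \<in> carrier (free_grp n)"
  by (simp add: free_grp_def gen_def reduced_Cons)

context group begin

definition cj :: "'a \<Rightarrow> 'a \<Rightarrow> 'a" where "cj g x = inv g \<otimes> x \<otimes> g"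
definition central :: "'a \<Rightarrow> bool" where "central z \<longleftrightarrow> z \<in> carrier G \<and> (\<forall>g\<in>carrier G. z \<otimes> g = g \<otimes> z)"

lemma cancel1: "x \<in> carrier G \<Longrightarrow> y \<in> carrier G \<Longrightarrow> inv x \<otimes> (x \<otimes> y) = y"
  by (simp add: m_assoc[symmetric])
lemma cancel2: "x \<in> carrier G \<Longrightarrow> y \<in> carrier G \<Longrightarrow> x \<otimes> (inv x \<otimes> y) = y"
  by (simp add: m_assoc[symmetric])

lemmas gs = m_assoc inv_mult_group cancel1 cancel2

lemma comm_closed[simp]: "x \<in> carrier G \<Longrightarrow> y \<in> carrier G \<Longrightarrow> comm G x y \<in> carrier G"
  by (simp add: comm_def)
lemma cj_closed[simp]: "g \<in> carrier G \<Longrightarrow> x \<in> carrier G \<Longrightarrow> cj g x \<in> carrier G"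
  by (simp add: cj_def)

lemma cj_mult: "g \<in> carrier G \<Longrightarrow> x \<in> carrier G \<Longrightarrow> y \<in> carrier G \<Longrightarrow> cj g (x \<otimes> y) = cj g x \<otimes> cj g y"
  by (simp add: cj_def gs)
lemma cj_inv: "g \<in> carrier G \<Longrightarrow> x \<in> carrier G \<Longrightarrow> cj g (inv x) = inv (cj g x)"
  by (simp add: cj_def gs)
lemma cj_comm: "g \<in> carrier G \<Longrightarrow> x \<in> carrier G \<Longrightarrow> y \<in> carrier G \<Longrightarrow> cj g (comm G x y) = comm G (cj g x) (cj g y)"
  by (simp add: comm_def cj_mult cj_inv)
lemma cj_eq: "g \<in> carrier G \<Longrightarrow> x \<in> carrier G \<Longrightarrow> cj g x = x \<otimes> comm G x g"
  by (simp add: comm_def cj_def gs)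
lemma cj_prod: "g \<in> carrier G \<Longrightarrow> h \<in> carrier G \<Longrightarrow> x \<in> carrier G \<Longrightarrow> cj (g \<otimes> h) x = cj h (cj g x)"
  by (simp add: cj_def gs)
lemma cj_cj_inv: "g \<in> carrier G \<Longrightarrow> x \<in> carrier G \<Longrightarrow> cj (inv g) (cj g x) = x"
  by (simp add: cj_def gs)

lemma centralD: "central z \<Longrightarrow> x \<in> carrier G \<Longrightarrow> z \<otimes> x = x \<otimes> z"
  by (simp add: central_def)
lemma central_carrier: "central z \<Longrightarrow> z \<in> carrier G"
  by (simp add: central_def)
lemma cj_central: "central z \<Longrightarrow> g \<in> carrier G \<Longrightarrow> cj g z = z"
  by (simp add: cj_def central_def gs)
lemma central_inv: "central z \<Longrightarrow> central (inv z)"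
proof -
  assume z: "central z"
  have zc: "z \<in> carrier G" using z by (simp add: central_def)
  have "inv z \<otimes> g = g \<otimes> inv z" if g: "g \<in> carrier G" for g
  proof -
    have "z \<otimes> (g \<otimes> inv z) = g" using g zc centralD[OF z g] by (simp add: m_assoc[symmetric]) (simp add: m_assoc)
    then show ?thesis using g zc by (simp add: inv_solve_left')
  qed
  then show ?thesis using zc by (simp add: central_def)
qed

lemma central_cancel: "central z \<Longrightarrow> w \<in> carrier G \<Longrightarrow> inv z \<otimes> (w \<otimes> z) = w"
  by (simp add: central_def centralD[symmetric] m_assoc[symmetric])
lemma central_mult: "central z \<Longrightarrow> central w \<Longrightarrow> central (z \<otimes> w)"
proof -
  assume z: "central z" and w: "central w"
  have c: "z \<in> carrier G" "w \<in> carrier G" using z w by (auto simp: central_def)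
  have "z \<otimes> w \<otimes> g = g \<otimes> (z \<otimes> w)" if g: "g \<in> carrier G" for g
  proof -
    have "z \<otimes> w \<otimes> g = z \<otimes> (g \<otimes> w)" using c g centralD[OF w g] by (simp add: m_assoc)
    also have "\<dots> = (z \<otimes> g) \<otimes> w" using c g by (simp add: m_assoc)
    also have "\<dots> = g \<otimes> (z \<otimes> w)" using c g centralD[OF z g] by (simp add: m_assoc)
    finally show ?thesis .
  qed
  then show ?thesis using c by (simp add: central_def)
qed
lemma central_one: "central \<one>" by (simp add: central_def)

lemma comm_mult_central_l: "central z \<Longrightarrow> x \<in> carrier G \<Longrightarrow> y \<in> carrier G \<Longrightarrow> comm G (x \<otimes> z) y = comm G x y"
proof -
  assume z: "central z" and xy: "x \<in> carrier G" "y \<in> carrier G"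
  have zc: "z \<in> carrier G" using z by (simp add: central_def)
  have "comm G (x \<otimes> z) y = inv z \<otimes> ((inv x \<otimes> inv y \<otimes> x) \<otimes> (z \<otimes> y))"
    using xy zc by (simp add: comm_def gs)
  also have "z \<otimes> y = y \<otimes> z" using z xy by (simp add: centralD)
  also have "inv z \<otimes> ((inv x \<otimes> inv y \<otimes> x) \<otimes> (y \<otimes> z)) = inv z \<otimes> ((inv x \<otimes> inv y \<otimes> x \<otimes> y) \<otimes> z)"
    using xy zc by (simp add: m_assoc)
  also have "\<dots> = inv x \<otimes> inv y \<otimes> x \<otimes> y" using z xy by (simp add: central_cancel)
  finally show ?thesis by (simp add: comm_def)
qed

lemma comm_mult_central_r: "central z \<Longrightarrow> x \<in> carrier G \<Longrightarrow> y \<in> carrier G \<Longrightarrow> comm G x (y \<otimes> z) = comm G x y"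
proof -
  assume z: "central z" and xy: "x \<in> carrier G" "y \<in> carrier G"
  have zc: "z \<in> carrier G" using z by (simp add: central_def)
  have "comm G x (y \<otimes> z) = inv x \<otimes> (inv z \<otimes> ((inv y \<otimes> x \<otimes> y) \<otimes> z))"
    using xy zc by (simp add: comm_def gs)
  also have "\<dots> = inv x \<otimes> (inv y \<otimes> x \<otimes> y)" using z xy by (simp add: central_cancel)
  finally show ?thesis using xy zc by (simp add: comm_def m_assoc)
qed

lemma comm_mult_r: "x \<in> carrier G \<Longrightarrow> y \<in> carrier G \<Longrightarrow> w \<in> carrier G \<Longrightarrow>
   comm G x (y \<otimes> w) = comm G x w \<otimes> cj w (comm G x y)"
  by (simp add: comm_def cj_def gs)
lemma comm_mult_l: "x \<in> carrier G \<Longrightarrow> y \<in> carrier G \<Longrightarrow> w \<in> carrier G \<Longrightarrow>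
   comm G (x \<otimes> y) w = cj y (comm G x w) \<otimes> comm G y w"
  by (simp add: comm_def cj_def gs)

lemma comm_inv: "x \<in> carrier G \<Longrightarrow> y \<in> carrier G \<Longrightarrow> inv (comm G x y) = comm G y x"
  by (simp add: comm_def gs)

lemma comm_one_iff: "x \<in> carrier G \<Longrightarrow> y \<in> carrier G \<Longrightarrow> comm G x y = \<one> \<longleftrightarrow> x \<otimes> y = y \<otimes> x"
proof -
  assume xy: "x \<in> carrier G" "y \<in> carrier G"
  have "comm G x y = inv (y \<otimes> x) \<otimes> (x \<otimes> y)" using xy by (simp add: comm_def gs)
  then show ?thesis using xy
    using inv_solve_left'[of "\<one>" "y \<otimes> x" "x \<otimes> y"] by simp
qed

lemma central_comm_inv: "central (comm G x y) \<Longrightarrow> x \<in> carrier G \<Longrightarrow> y \<in> carrier G \<Longrightarrow> central (comm G y x)"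
  using central_inv comm_inv by metis

lemma comm_one_left: "y \<in> carrier G \<Longrightarrow> comm G \<one> y = \<one>"
  by (simp add: comm_def)

lemma lcan: "x \<in> carrier G \<Longrightarrow> y \<in> carrier G \<Longrightarrow> z \<in> carrier G \<Longrightarrow> x \<otimes> y = x \<otimes> z \<Longrightarrow> y = z"
  by (metis cancel1)

lemma cj_fix: "y \<in> carrier G \<Longrightarrow> c \<in> carrier G \<Longrightarrow> c \<otimes> y = y \<otimes> c \<Longrightarrow> cj y c = c"
  by (simp add: cj_def m_assoc cancel1)

lemma cj_pow: "g \<in> carrier G \<Longrightarrow> x \<in> carrier G \<Longrightarrow> cj g (x [^] (k::nat)) = (cj g x) [^] k"
  by (induction k) (simp_all add: cj_mult, simp add: cj_def)

lemma comm_pow: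
  assumes x: "x \<in> carrier G" and y: "y \<in> carrier G"
    and cx: "comm G x y \<otimes> x = x \<otimes> comm G x y" and cy: "comm G x y \<otimes> y = y \<otimes> comm G x y"
  shows "comm G (x [^] (k::nat)) y = comm G x y [^] k" "comm G x (y [^] (k::nat)) = comm G x y [^] k"
proof -
  let ?c = "comm G x y"
  have cc: "?c \<in> carrier G" using x y by simp
  show "comm G (x [^] k) y = ?c [^] k"
  proof (induction k)
    case 0 then show ?case using y by (simp add: comm_def)
  next
    case (Suc k)
    have "comm G (x [^] Suc k) y = cj x (comm G (x [^] k) y) \<otimes> ?c"
      using x y by (simp add: comm_mult_l)
    also have "\<dots> = ?c [^] k \<otimes> ?c" using Suc x cc cj_fix[OF x cc cx] by (simp add: cj_pow)
    finally show ?case by simp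
  qed
  show "comm G x (y [^] k) = ?c [^] k"
  proof (induction k)
    case 0 then show ?case using x by (simp add: comm_def)
  next
    case (Suc k)
    have "comm G x (y [^] Suc k) = ?c \<otimes> cj y (comm G x (y [^] k))"
      using x y by (simp add: comm_mult_r)
    also have "\<dots> = ?c \<otimes> ?c [^] k" using Suc y cc cj_fix[OF y cc cy] by (simp add: cj_pow)
    finally show ?case using cc by (metis nat_pow_Suc2)
  qed
qed

lemma cj_inv_central:
  assumes g: "g \<in> carrier G" and x: "x \<in> carrier G" and z: "central z" and e: "cj g x = x \<otimes> z"
  shows "cj (inv g) x = x \<otimes> inv z"
proof -
  have zc: "z \<in> carrier G" using z central_carrier by blast
  have "cj g (x \<otimes> inv z) = x" using g x zc e cj_central[OF central_inv[OF z] g]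
    by (simp add: cj_mult m_assoc)
  then have "cj (inv g) (cj g (x \<otimes> inv z)) = cj (inv g) x" by simp
  then show ?thesis using g x zc by (simp add: cj_cj_inv)
qed

lemma central_pow: "central z \<Longrightarrow> central (z [^] (k::nat))"
  by (induction k) (simp_all add: central_one central_mult)

lemma f_square:
  assumes a: "a \<in> carrier G" and b: "b \<in> carrier G" and c: "c \<in> carrier G"
    and h1: "central (comm G a c)"
    and h2: "central (comm G (comm G a b) a)"
    and h3: "central (comm G (comm G a b) b)"
    and h4: "central (comm G (comm G b c) b)"
    and h5: "central (comm G (comm G b c) c)"
    and h6: "central (comm G (comm G a b) (comm G b c))"
  shows "comm G (comm G a b) (comm G b c) \<otimes> comm G (comm G a b) (comm G b c) = \<one>"
proof -
  define d where "d = comm G a b"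
  define u where "u = comm G b c"
  define v where "v = comm G a u"
  define w where "w = comm G d c"
  define f where "f = comm G d u"
  define za where "za = comm G d a"
  define zb where "zb = comm G d b"
  have C: "d \<in> carrier G" "u \<in> carrier G" "v \<in> carrier G" "w \<in> carrier G" "f \<in> carrier G"
    "za \<in> carrier G" "zb \<in> carrier G"
    using a b c by (simp_all add: d_def u_def v_def w_def f_def za_def zb_def)
  have cf: "central f" using h6 by (simp add: f_def d_def u_def)
  have cza: "central za" using h2 by (simp add: za_def d_def)
  have czb: "central zb" using h3 by (simp add: zb_def d_def)
  have cbu: "central (comm G b u)" using central_comm_inv[OF h4] b c by (simp add: u_def)
  have ccu: "central (comm G c u)" using central_comm_inv[OF h5] b c by (simp add: u_def)
  have cf': "central (inv f)" "central (inv za)" using cf cza by (simp_all add: central_inv)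
  have e1: "cj (inv a) d = d \<otimes> inv za"
    by (rule cj_inv_central[OF a C(1) cza]) (simp add: cj_eq a C za_def)
  have e2: "cj (inv u) d = d \<otimes> inv f"
    by (rule cj_inv_central[OF C(2) C(1) cf]) (simp add: cj_eq C f_def)
  have "cj v d = cj u (cj a (cj (inv u) (cj (inv a) d)))"
    using a C by (simp add: v_def comm_def cj_prod)
  also have "\<dots> = d \<otimes> f \<otimes> za \<otimes> inv f \<otimes> inv za"
  proof -
    have ad: "cj a d = d \<otimes> za" using a C by (simp add: cj_eq za_def)
    have ud: "cj u d = d \<otimes> f" using C by (simp add: cj_eq f_def)
    have s1: "cj (inv u) (d \<otimes> inv za) = d \<otimes> inv f \<otimes> inv za"
      using C e2 cj_central[OF cf'(2)] by (simp add: cj_mult)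
    have s2: "cj a (d \<otimes> inv f \<otimes> inv za) = d \<otimes> za \<otimes> inv f \<otimes> inv za"
      using a C ad cj_central[OF cf'(2) a] cj_central[OF cf'(1) a] by (simp add: cj_mult)
    have s3: "cj u (d \<otimes> za \<otimes> inv f \<otimes> inv za) = d \<otimes> f \<otimes> za \<otimes> inv f \<otimes> inv za"
      using C ud cj_central[OF cf'(2)] cj_central[OF cf'(1)] cj_central[OF cza] by (simp add: cj_mult)
    show ?thesis using e1 s1 s2 s3 by simp
  qed
  also have "\<dots> = d \<otimes> (f \<otimes> (za \<otimes> (inv za \<otimes> inv f)))"
    using C centralD[OF cf'(1), of "inv za"] by (simp add: m_assoc)
  also have "\<dots> = d" using C by (simp add: cancel2)
  finally have "cj v d = d" .
  then have dv: "comm G d v = \<one>" using C by (simp add: cj_eq)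
  then have dv': "d \<otimes> v = v \<otimes> d" using C by (simp add: comm_one_iff)
  have "d \<otimes> f = cj u d" using C by (simp add: cj_eq f_def)
  also have "\<dots> = comm G (cj u a) (cj u b)" using a b C by (simp add: d_def cj_comm)
  also have "\<dots> = comm G (a \<otimes> v) (b \<otimes> comm G b u)" using a b C by (simp add: cj_eq v_def)
  also have "\<dots> = comm G (a \<otimes> v) b" using a b C cbu by (simp add: comm_mult_central_r)
  also have "\<dots> = cj v d \<otimes> comm G v b" using a b C by (simp add: comm_mult_l d_def)
  also have "\<dots> = d \<otimes> comm G v b" using C dv by (simp add: cj_eq)
  finally have vb: "comm G v b = f" using C b by (metis lcan comm_closed)
  have "d \<otimes> w = cj c d" using C c by (simp add: cj_eq w_def)
  also have "\<dots> = comm G (cj c a) (cj c b)" unfolding d_def by (rule cj_comm[OF c a b])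
  also have "\<dots> = comm G (a \<otimes> comm G a c) (b \<otimes> u)" using a b c by (simp add: cj_eq u_def)
  also have "\<dots> = comm G a (b \<otimes> u)" using a b c C h1 by (simp add: comm_mult_central_l)
  also have "\<dots> = v \<otimes> (d \<otimes> f)" using a b C by (simp add: comm_mult_r v_def d_def[symmetric] cj_eq f_def)
  also have "\<dots> = d \<otimes> (v \<otimes> f)" using C dv' by (simp add: m_assoc[symmetric])
  finally have wv: "w = v \<otimes> f" using C by (metis lcan m_closed)
  have wb: "comm G w b = f" using wv vb cf C b by (simp add: comm_mult_central_l)
  have "cj u w = comm G (cj u d) (cj u c)" using c C by (simp add: w_def cj_comm)
  also have "\<dots> = comm G (d \<otimes> f) (c \<otimes> comm G c u)" using c C by (simp add: cj_eq f_def)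
  also have "\<dots> = w" using c C cf ccu by (simp add: comm_mult_central_l comm_mult_central_r w_def)
  finally have wu: "comm G w u = \<one>" using C by (simp add: cj_eq)
  have "zb = cj c zb" using czb c by (simp add: cj_central)
  also have "\<dots> = comm G (cj c d) (cj c b)" unfolding zb_def by (rule cj_comm[OF c C(1) b])
  also have "\<dots> = comm G (d \<otimes> w) (b \<otimes> u)" using b c C by (simp add: cj_eq w_def u_def)
  also have "\<dots> = comm G (d \<otimes> w) u \<otimes> cj u (comm G (d \<otimes> w) b)" using b C by (simp add: comm_mult_r)
  also have "comm G (d \<otimes> w) u = f" using C wu cf by (simp add: comm_mult_l f_def[symmetric] cj_central)
  also have "comm G (d \<otimes> w) b = zb \<otimes> f" using C b wb czb by (simp add: comm_mult_l zb_def[symmetric] cj_central)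
  also have "cj u (zb \<otimes> f) = zb \<otimes> f" using C czb cf by (simp add: cj_central central_mult)
  also have "f \<otimes> (zb \<otimes> f) = zb \<otimes> (f \<otimes> f)" using C centralD[OF cf, of zb] by (simp add: m_assoc[symmetric])
  finally have "zb \<otimes> (f \<otimes> f) = zb" by simp
  then have "f \<otimes> f = \<one>" using C by simp
  then show ?thesis by (simp add: f_def d_def u_def)
qed

lemma central_comm_one: "central x \<Longrightarrow> y \<in> carrier G \<Longrightarrow> comm G x y = \<one>"
  by (metis comm_one_iff central_carrier centralD)
lemma central_comm_one2: "central x \<Longrightarrow> y \<in> carrier G \<Longrightarrow> comm G y x = \<one>"
  by (metis comm_one_iff central_carrier centralD)

lemma pow_mult_central: "central z \<Longrightarrow> w \<in> carrier G \<Longrightarrow> (w \<otimes> z) [^] (k::nat) = w [^] k \<otimes> z [^] k"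
proof (induction k)
  case 0 then show ?case by simp
next
  case (Suc k)
  have zc: "z \<in> carrier G" using Suc central_carrier by blast
  have "(w \<otimes> z) [^] Suc k = w [^] k \<otimes> (z [^] k \<otimes> w) \<otimes> z" using Suc zc by (simp add: m_assoc)
  also have "z [^] k \<otimes> w = w \<otimes> z [^] k" using Suc central_pow centralD by blast
  finally show ?case using Suc zc by (simp add: m_assoc)
qed

lemma comm_pow_expand:
  assumes a: "a \<in> carrier G" and b: "b \<in> carrier G"
    and c1: "central (comm G (comm G a b) a)" and c2: "central (comm G (comm G a b) b)"
  shows "comm G (a [^] (k::nat)) b = comm G a b [^] k \<otimes> comm G (comm G a b) a [^] (k choose 2)"
    "comm G a (b [^] (k::nat)) = comm G a b [^] k \<otimes> comm G (comm G a b) b [^] (k choose 2)"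
proof -
  define d where "d = comm G a b"
  define z1 where "z1 = comm G d a"
  define z2 where "z2 = comm G d b"
  have dc: "d \<in> carrier G" using a b by (simp add: d_def)
  have cz1: "central z1" and cz2: "central z2" using c1 c2 by (simp_all add: z1_def z2_def d_def)
  have z1c: "z1 \<in> carrier G" and z2c: "z2 \<in> carrier G" using cz1 cz2 central_carrier by auto
  have sc: "Suc k choose 2 = k + (k choose 2)" for k :: nat
    by (simp add: numeral_2_eq_2)
  have "comm G (a [^] k) b = d [^] k \<otimes> z1 [^] (k choose 2)" for k
  proof (induction k)
    case 0 then show ?case using b z1c by (simp add: comm_def numeral_2_eq_2)
  next
    case (Suc k)
    have "comm G (a [^] Suc k) b = cj a (comm G (a [^] k) b) \<otimes> d"
      using a b by (simp add: comm_mult_l d_def)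
    also have "\<dots> = (cj a d) [^] k \<otimes> z1 [^] (k choose 2) \<otimes> d"
      using Suc a dc z1c cj_central[OF central_pow[OF cz1] a] by (simp add: cj_mult cj_pow)
    also have "cj a d = d \<otimes> z1" using a dc by (simp add: cj_eq z1_def)
    also have "(d \<otimes> z1) [^] k = d [^] k \<otimes> z1 [^] k" using cz1 dc by (simp add: pow_mult_central)
    also have "d [^] k \<otimes> z1 [^] k \<otimes> z1 [^] (k choose 2) \<otimes> d = d [^] k \<otimes> d \<otimes> (z1 [^] k \<otimes> z1 [^] (k choose 2))"
      using dc z1c centralD[OF central_mult[OF central_pow[OF cz1] central_pow[OF cz1]] dc, of k "k choose 2"]
      by (simp add: m_assoc)
    also have "\<dots> = d [^] Suc k \<otimes> z1 [^] (Suc k choose 2)"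
      using dc z1c by (simp add: nat_pow_mult sc)
    finally show ?case .
  qed
  then show "comm G (a [^] k) b = comm G a b [^] k \<otimes> comm G (comm G a b) a [^] (k choose 2)"
    by (simp add: d_def z1_def)
  have "comm G a (b [^] k) = d [^] k \<otimes> z2 [^] (k choose 2)" for k
  proof (induction k)
    case 0 then show ?case using a z2c by (simp add: comm_def numeral_2_eq_2)
  next
    case (Suc k)
    have "comm G a (b [^] Suc k) = d \<otimes> cj b (comm G a (b [^] k))"
      using a b by (simp add: comm_mult_r d_def)
    also have "\<dots> = d \<otimes> ((cj b d) [^] k \<otimes> z2 [^] (k choose 2))"
      using Suc b dc z2c cj_central[OF central_pow[OF cz2] b] by (simp add: cj_mult cj_pow)
    also have "cj b d = d \<otimes> z2" using b dc by (simp add: cj_eq z2_def)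
    also have "(d \<otimes> z2) [^] k = d [^] k \<otimes> z2 [^] k" using cz2 dc by (simp add: pow_mult_central)
    also have "d \<otimes> (d [^] k \<otimes> z2 [^] k \<otimes> z2 [^] (k choose 2)) = (d \<otimes> d [^] k) \<otimes> (z2 [^] k \<otimes> z2 [^] (k choose 2))"
      using dc z2c by (simp add: m_assoc)
    also have "\<dots> = d [^] Suc k \<otimes> z2 [^] (Suc k choose 2)"
      using dc z2c by (simp add: nat_pow_mult sc nat_pow_Suc2[symmetric] del: nat_pow_Suc)
    finally show ?case .
  qed
  then show "comm G a (b [^] k) = comm G a b [^] k \<otimes> comm G (comm G a b) b [^] (k choose 2)"
    by (simp add: d_def z2_def)
qed

lemma e_lemma:
  assumes a: "a \<in> carrier G" and b: "b \<in> carrier G"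
    and c1: "central (comm G (comm G a b) a)" and c2: "central (comm G (comm G a b) b)"
    and am: "central (a [^] (m::nat))" and bm: "central (b [^] m)"
  shows "comm G (comm G a b) (a \<otimes> inv b) [^] m = \<one>"
    "comm G (comm G a b) (a \<otimes> inv b) [^] (m choose 2) = \<one>"
proof -
  define d where "d = comm G a b"
  define z1 where "z1 = comm G d a"
  define z2 where "z2 = comm G d b"
  have dc: "d \<in> carrier G" using a b by (simp add: d_def)
  have cz1: "central z1" and cz2: "central z2" using c1 c2 by (simp_all add: z1_def z2_def d_def)
  have z1c: "z1 \<in> carrier G" and z2c: "z2 \<in> carrier G" using cz1 cz2 central_carrier by auto
  have "cj (inv b) d = d \<otimes> inv z2"
    by (rule cj_inv_central[OF b dc cz2]) (simp add: cj_eq b dc z2_def)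
  then have "d \<otimes> comm G d (inv b) = d \<otimes> inv z2" using b dc by (simp add: cj_eq)
  then have dib: "comm G d (inv b) = inv z2" using b dc z2c by (metis lcan inv_closed comm_closed)
  have e: "comm G d (a \<otimes> inv b) = inv z2 \<otimes> z1"
    using a b dc dib by (simp add: comm_mult_r cj_central[OF cz1] z1_def[symmetric])
  have epow: "comm G d (a \<otimes> inv b) [^] k = inv (z2 [^] k) \<otimes> z1 [^] k" for k :: nat
    using e cz1 z2c by (simp add: pow_mult_central nat_pow_inv)
  have z1m: "z1 [^] m = \<one>"
  proof -
    have "comm G d (a [^] m) = z1 [^] m"
      using comm_pow(2)[OF dc a] cz1 dc a by (simp add: z1_def centralD central_carrier)
    moreover have "comm G d (a [^] m) = \<one>" using am dc by (simp add: central_comm_one2)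
    ultimately show ?thesis by simp
  qed
  have z2m: "z2 [^] m = \<one>"
  proof -
    have "comm G d (b [^] m) = z2 [^] m"
      using comm_pow(2)[OF dc b] cz2 dc b by (simp add: z2_def centralD central_carrier)
    moreover have "comm G d (b [^] m) = \<one>" using bm dc by (simp add: central_comm_one2)
    ultimately show ?thesis by simp
  qed
  show "comm G (comm G a b) (a \<otimes> inv b) [^] m = \<one>"
    using epow[of m] z1m z2m by (simp add: d_def)
  have "comm G (a [^] m) b = \<one>" using am b by (simp add: central_comm_one)
  then have x1: "d [^] m \<otimes> z1 [^] (m choose 2) = \<one>"
    using comm_pow_expand(1)[OF a b c1 c2, of m] by (simp add: d_def z1_def)
  have "comm G a (b [^] m) = \<one>" using bm a by (simp add: central_comm_one2)
  then have x2: "d [^] m \<otimes> z2 [^] (m choose 2) = \<one>"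
    using comm_pow_expand(2)[OF a b c1 c2, of m] by (simp add: d_def z2_def)
  have "z1 [^] (m choose 2) = z2 [^] (m choose 2)"
    using x1 x2 dc z1c z2c by (metis lcan nat_pow_closed)
  then show "comm G (comm G a b) (a \<otimes> inv b) [^] (m choose 2) = \<one>"
    using epow[of "m choose 2"] z2c by (simp add: d_def)
qed

end

context group begin

lemma normal_closure_normal:
  assumes S: "S \<subseteq> carrier G" shows "normal_closure G S \<lhd> G"
  unfolding normal_closure_def
proof (rule normal_generateI)
  show "{g \<otimes> r \<otimes> inv g |g r. g \<in> carrier G \<and> r \<in> S} \<subseteq> carrier G" using S by auto
next
  fix h g assume h: "h \<in> {g \<otimes> r \<otimes> inv g |g r. g \<in> carrier G \<and> r \<in> S}" and g: "g \<in> carrier G"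
  then obtain g' r where h': "h = g' \<otimes> r \<otimes> inv g'" "g' \<in> carrier G" "r \<in> S" by blast
  have rc: "r \<in> carrier G" using h' S by auto
  have "g \<otimes> h \<otimes> inv g = (g \<otimes> g') \<otimes> r \<otimes> inv (g \<otimes> g')"
    using h' g rc by (simp add: m_assoc inv_mult_group)
  then show "g \<otimes> h \<otimes> inv g \<in> {g \<otimes> r \<otimes> inv g |g r. g \<in> carrier G \<and> r \<in> S}"
    using h' g by blast
qed

lemma normal_closure_incl:
  assumes S: "S \<subseteq> carrier G" and r: "r \<in> S" shows "r \<in> normal_closure G S"
proof -
  have "\<one> \<otimes> r \<otimes> inv \<one> = r" using S r by auto
  then have "r \<in> {g \<otimes> r \<otimes> inv g |g r. g \<in> carrier G \<and> r \<in> S}" using r by force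
  then show ?thesis unfolding normal_closure_def by (rule generate.incl)
qed

lemma comm_subgroup_normal:
  assumes A: "A \<lhd> G" shows "comm_subgroup G A (carrier G) \<lhd> G"
  unfolding comm_subgroup_def
proof (rule normal_generateI)
  have Ac: "A \<subseteq> carrier G" using A normal_imp_subgroup subgroup.subset by blast
  then show "{comm G a b |a b. a \<in> A \<and> b \<in> carrier G} \<subseteq> carrier G" by auto
next
  have Ac: "A \<subseteq> carrier G" using A normal_imp_subgroup subgroup.subset by blast
  fix h g assume h: "h \<in> {comm G a b |a b. a \<in> A \<and> b \<in> carrier G}" and g: "g \<in> carrier G"
  then obtain a b where ab: "h = comm G a b" "a \<in> A" "b \<in> carrier G" by blast
  have ac: "a \<in> carrier G" using ab Ac by auto
  have "g \<otimes> h \<otimes> inv g = cj (inv g) h" using g by (simp add: cj_def)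
  also have "\<dots> = comm G (cj (inv g) a) (cj (inv g) b)" using ab ac g by (simp add: cj_comm)
  finally have "g \<otimes> h \<otimes> inv g = comm G (g \<otimes> a \<otimes> inv g) (g \<otimes> b \<otimes> inv g)" using g by (simp add: cj_def)
  moreover have "g \<otimes> a \<otimes> inv g \<in> A" using normal.inv_op_closed2[OF A g ab(2)] .
  moreover have "g \<otimes> b \<otimes> inv g \<in> carrier G" using g ab by simp
  ultimately show "g \<otimes> h \<otimes> inv g \<in> {comm G a b |a b. a \<in> A \<and> b \<in> carrier G}" by blast
qed

lemma comm_subgroup_incl: "a \<in> A \<Longrightarrow> b \<in> B \<Longrightarrow> comm G a b \<in> comm_subgroup G A B"
  unfolding comm_subgroup_def by (rule generate.incl) blast

lemma quot_hom: "N \<lhd> G \<Longrightarrow> group_hom G (G Mod N) (\<lambda>g. N #> g)"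
  by (simp add: group_hom_def group_hom_axioms_def is_group normal.factorgroup_is_group normal.r_coset_hom_Mod)

lemma mod_one_iff: "N \<lhd> G \<Longrightarrow> x \<in> carrier G \<Longrightarrow> (N #> x = N) \<longleftrightarrow> x \<in> N"
  by (metis coset_join2 normal_imp_subgroup rcos_self)

lemma comm_pow_normal:
  assumes N: "N \<lhd> G" and x: "x \<in> carrier G" and y: "y \<in> carrier G"
    and h1: "comm G (comm G x y) x \<in> N" and h2: "comm G (comm G x y) y \<in> N"
    and h3: "x [^] (m::nat) \<in> N"
  shows "comm G x y [^] m \<in> N"
proof -
  interpret H: group_hom G "G Mod N" "\<lambda>g. N #> g" using quot_hom[OF N] .
  have hc: "(\<And>a b. a \<in> carrier G \<Longrightarrow> b \<in> carrier G \<Longrightarrow> N #> comm G a b = comm (G Mod N) (N #> a) (N #> b))"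
    by (simp add: comm_def)
  have one: "\<And>z. z \<in> carrier G \<Longrightarrow> z \<in> N \<Longrightarrow> N #> z = \<one>\<^bsub>G Mod N\<^esub>"
    using N mod_one_iff by simp
  let ?X = "N #> x" and ?Y = "N #> y" and ?C = "N #> comm G x y"
  have XY: "?X \<in> carrier (G Mod N)" "?Y \<in> carrier (G Mod N)" using x y by simp_all
  have C: "?C = comm (G Mod N) ?X ?Y" using hc x y by simp
  have "comm (G Mod N) ?C ?X = \<one>\<^bsub>G Mod N\<^esub>" using hc[of "comm G x y" x] one[OF _ h1] x y by simp
  then have cx: "?C \<otimes>\<^bsub>G Mod N\<^esub> ?X = ?X \<otimes>\<^bsub>G Mod N\<^esub> ?C"
    using group.comm_one_iff[OF H.H.is_group] XY x y by simp
  have "comm (G Mod N) ?C ?Y = \<one>\<^bsub>G Mod N\<^esub>" using hc[of "comm G x y" y] one[OF _ h2] x y by simp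
  then have cy: "?C \<otimes>\<^bsub>G Mod N\<^esub> ?Y = ?Y \<otimes>\<^bsub>G Mod N\<^esub> ?C"
    using group.comm_one_iff[OF H.H.is_group] XY x y by simp
  have "comm (G Mod N) (?X [^]\<^bsub>G Mod N\<^esub> m) ?Y = ?C [^]\<^bsub>G Mod N\<^esub> m"
    using group.comm_pow(1)[OF H.H.is_group XY] cx cy C by simp
  moreover have "?X [^]\<^bsub>G Mod N\<^esub> m = \<one>\<^bsub>G Mod N\<^esub>"
    using H.hom_nat_pow[OF x, of m] one[OF _ h3] x by simp
  moreover have "comm (G Mod N) \<one>\<^bsub>G Mod N\<^esub> ?Y = \<one>\<^bsub>G Mod N\<^esub>"
    by (rule group.comm_one_left[OF H.H.is_group XY(2)])
  ultimately have "?C [^]\<^bsub>G Mod N\<^esub> m = \<one>\<^bsub>G Mod N\<^esub>"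
    by simp
  then have "N #> (comm G x y [^] m) = N" using H.hom_nat_pow[of "comm G x y" m] x y by simp
  then show ?thesis using N mod_one_iff x y by simp
qed

end

lemma rel1: "1 \<le> i \<Longrightarrow> i \<le> n - 1 \<Longrightarrow> gen i [^]\<^bsub>free_grp n\<^esub> m \<in> UT_relators n m"
  unfolding UT_relators_def by blast
lemma rel2: "1 \<le> i \<Longrightarrow> i < j - 1 \<Longrightarrow> j - 1 \<le> n - 2 \<Longrightarrow> comm (free_grp n) (gen i) (gen j) \<in> UT_relators n m"
  unfolding UT_relators_def by blast
lemma rel3: "1 \<le> i \<Longrightarrow> i \<le> n - 2 \<Longrightarrow> comm (free_grp n) (comm (free_grp n) (gen i) (gen (i+1))) (gen i) \<in> UT_relators n m"
  unfolding UT_relators_def by blast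
lemma rel4: "1 \<le> i \<Longrightarrow> i \<le> n - 2 \<Longrightarrow> comm (free_grp n) (comm (free_grp n) (gen i) (gen (i+1))) (gen (i+1)) \<in> UT_relators n m"
  unfolding UT_relators_def by blast
lemma rel5: "1 \<le> i \<Longrightarrow> i \<le> n - 3 \<Longrightarrow> comm (free_grp n) (comm (free_grp n) (gen i) (gen (i+1)))
                          (comm (free_grp n) (gen (i+1)) (gen (i+2))) \<in> UT_relators n m"
  unfolding UT_relators_def by blast

theorem mainTheorem1:
  fixes n m :: nat
  assumes "n \<ge> 3" and "m \<ge> 2"
  defines "F \<equiv> free_grp n"
  shows
    "(\<forall>i j. 1 \<le> i \<and> i < j - 1 \<and> j - 1 \<le> n - 2 \<longrightarrow>
        group.ord (Q n m) (proj n m (comm F (gen i) (gen j))) dvd m)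
   \<and> (\<forall>i. 1 \<le> i \<and> i \<le> n - 2 \<longrightarrow>
        group.ord (Q n m) (proj n m (comm F (comm F (gen i) (gen (i+1))) (gen i))) dvd m
      \<and> group.ord (Q n m)
          (proj n m (comm F (comm F (gen i) (gen (i+1))) (gen i \<otimes>\<^bsub>F\<^esub> inv\<^bsub>F\<^esub> gen (i+1))))
          dvd gcd m (m choose 2))
   \<and> (\<forall>i. 1 \<le> i \<and> i \<le> n - 3 \<longrightarrow>
        group.ord (Q n m)
          (proj n m (comm F (comm F (gen i) (gen (i+1))) (comm F (gen (i+1)) (gen (i+2)))))
          dvd gcd 2 m)"
proof -
  interpret Fg: group "free_grp n" by (rule free_grp_group)
  have gc: "\<And>i. 1 \<le> i \<Longrightarrow> i \<le> n - 1 \<Longrightarrow> gen i \<in> carrier (free_grp n)" by (rule gen_carrier)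
  have relc: "UT_relators n m \<subseteq> carrier (free_grp n)"
  proof
    fix x assume "x \<in> UT_relators n m"
    then show "x \<in> carrier (free_grp n)"
      unfolding UT_relators_def by (auto intro!: Fg.comm_closed Fg.nat_pow_closed gc)
  qed
  have Rn: "UT_R n m \<lhd> free_grp n" unfolding UT_R_def by (rule Fg.normal_closure_normal[OF relc])
  have Rin: "\<And>r. r \<in> UT_relators n m \<Longrightarrow> r \<in> UT_R n m"
    unfolding UT_R_def by (rule Fg.normal_closure_incl[OF relc])
  have Rc: "UT_R n m \<subseteq> carrier (free_grp n)" using Rn normal_imp_subgroup subgroup.subset by blast
  have RFn: "RF n m \<lhd> free_grp n" unfolding RF_def by (rule Fg.comm_subgroup_normal[OF Rn])
  have RFin: "\<And>r x. r \<in> UT_R n m \<Longrightarrow> x \<in> carrier (free_grp n) \<Longrightarrow> comm (free_grp n) r x \<in> RF n m"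
    unfolding RF_def by (rule Fg.comm_subgroup_incl)
  have pj: "proj n m = (\<lambda>g. RF n m #>\<^bsub>free_grp n\<^esub> g)" by (rule ext) (simp add: proj_def)
  interpret h: group_hom "free_grp n" "Q n m" "proj n m"
    unfolding pj Q_def by (rule Fg.quot_hom[OF RFn])

  have hcomm: "\<And>x y. x \<in> carrier (free_grp n) \<Longrightarrow> y \<in> carrier (free_grp n) \<Longrightarrow>
      proj n m (comm (free_grp n) x y) = comm (Q n m) (proj n m x) (proj n m y)"
    by (simp add: comm_def)
  have Qcar: "carrier (Q n m) = proj n m ` carrier (free_grp n)"
    by (simp add: Q_def pj carrier_FactGroup)
  have hone: "\<And>x. x \<in> RF n m \<Longrightarrow> x \<in> carrier (free_grp n) \<Longrightarrow> proj n m x = \<one>\<^bsub>Q n m\<^esub>"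
    using Fg.mod_one_iff[OF RFn] by (simp add: Q_def proj_def)
  have cen: "group.central (Q n m) (proj n m r)" if r: "r \<in> UT_R n m" for r
  proof -
    have rc: "r \<in> carrier (free_grp n)" using r Rc by auto
    have "proj n m r \<otimes>\<^bsub>Q n m\<^esub> g = g \<otimes>\<^bsub>Q n m\<^esub> proj n m r" if g: "g \<in> carrier (Q n m)" for g
    proof -
      obtain x where x: "x \<in> carrier (free_grp n)" "g = proj n m x" using g Qcar by auto
      have "comm (Q n m) (proj n m r) g = \<one>\<^bsub>Q n m\<^esub>"
        using x rc hcomm[of r x] hone[OF RFin[OF r x(1)]] by simp
      then show ?thesis using h.H.comm_one_iff x rc by simp
    qed
    then show ?thesis unfolding h.H.central_def using rc by simp
  qed
  have cenrel: "\<And>r. r \<in> UT_relators n m \<Longrightarrow> group.central (Q n m) (proj n m r)" using cen Rin by blast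
  have orddvd: "\<And>x k. x \<in> carrier (Q n m) \<Longrightarrow> x [^]\<^bsub>Q n m\<^esub> (k::nat) = \<one>\<^bsub>Q n m\<^esub> \<Longrightarrow> group.ord (Q n m) x dvd k"
    using h.H.pow_eq_id by blast
  have powc: "\<And>i. 1 \<le> i \<Longrightarrow> i \<le> n - 1 \<Longrightarrow> group.central (Q n m) (proj n m (gen i) [^]\<^bsub>Q n m\<^esub> m)"
    using cenrel rel1 gc by (metis h.hom_nat_pow)
  have P1: "group.ord (Q n m) (proj n m (comm (free_grp n) (gen i) (gen j))) dvd m"
    if ij: "1 \<le> i" "i < j - 1" "j - 1 \<le> n - 2" for i j
  proof -
    have a: "gen i \<in> carrier (free_grp n)" and b: "gen j \<in> carrier (free_grp n)" using ij gc by auto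
    define A where "A = proj n m (gen i)"
    define B where "B = proj n m (gen j)"
    have AB: "A \<in> carrier (Q n m)" "B \<in> carrier (Q n m)" using a b by (simp_all add: A_def B_def)
    have C: "proj n m (comm (free_grp n) (gen i) (gen j)) = comm (Q n m) A B"
      using a b hcomm by (simp add: A_def B_def)
    have cC: "group.central (Q n m) (comm (Q n m) A B)" using C cenrel[OF rel2[OF ij]] by simp
    have "comm (Q n m) (A [^]\<^bsub>Q n m\<^esub> m) B = comm (Q n m) A B [^]\<^bsub>Q n m\<^esub> m"
      using h.H.comm_pow(1)[OF AB] cC AB by (simp add: h.H.centralD)
    moreover have "comm (Q n m) (A [^]\<^bsub>Q n m\<^esub> m) B = \<one>\<^bsub>Q n m\<^esub>"
      using powc[of i] ij AB by (simp add: A_def h.H.central_comm_one)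
    ultimately show ?thesis using C AB orddvd by simp
  qed
  have P2: "group.ord (Q n m) (proj n m (comm (free_grp n) (comm (free_grp n) (gen i) (gen (i+1))) (gen i))) dvd m
      \<and> group.ord (Q n m)
          (proj n m (comm (free_grp n) (comm (free_grp n) (gen i) (gen (i+1))) (gen i \<otimes>\<^bsub>free_grp n\<^esub> inv\<^bsub>free_grp n\<^esub> gen (i+1))))
          dvd gcd m (m choose 2)"
    if ii: "1 \<le> i" "i \<le> n - 2" for i
  proof -
    have a: "gen i \<in> carrier (free_grp n)" and b: "gen (i+1) \<in> carrier (free_grp n)" using ii gc by auto
    define A where "A = proj n m (gen i)"
    define B where "B = proj n m (gen (i+1))"
    have AB: "A \<in> carrier (Q n m)" "B \<in> carrier (Q n m)" using a b by (simp_all add: A_def B_def)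
    define D where "D = comm (Q n m) A B"
    have Dc: "D \<in> carrier (Q n m)" using AB by (simp add: D_def)
    have pD: "proj n m (comm (free_grp n) (gen i) (gen (i+1))) = D"
      using a b hcomm by (simp add: A_def B_def D_def)
    have c1: "group.central (Q n m) (comm (Q n m) D A)"
      using cenrel[OF rel3[OF ii]] hcomm a b pD by (simp add: A_def)
    have c2: "group.central (Q n m) (comm (Q n m) D B)"
      using cenrel[OF rel4[OF ii]] hcomm a b pD by (simp add: B_def)
    have am: "group.central (Q n m) (A [^]\<^bsub>Q n m\<^esub> m)" using powc[of i] ii by (simp add: A_def)
    have bm: "group.central (Q n m) (B [^]\<^bsub>Q n m\<^esub> m)" using powc[of "i+1"] ii by (simp add: B_def)
    have e1: "proj n m (comm (free_grp n) (comm (free_grp n) (gen i) (gen (i+1))) (gen i)) = comm (Q n m) D A"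
      using a b hcomm pD by (simp add: A_def)
    have e2: "proj n m (comm (free_grp n) (comm (free_grp n) (gen i) (gen (i+1))) (gen i \<otimes>\<^bsub>free_grp n\<^esub> inv\<^bsub>free_grp n\<^esub> gen (i+1)))
        = comm (Q n m) D (A \<otimes>\<^bsub>Q n m\<^esub> inv\<^bsub>Q n m\<^esub> B)"
      using a b hcomm pD by (simp add: A_def B_def)
    have "comm (Q n m) D (A [^]\<^bsub>Q n m\<^esub> m) = comm (Q n m) D A [^]\<^bsub>Q n m\<^esub> m"
      using h.H.comm_pow(2)[OF Dc AB(1)] c1 AB Dc by (simp add: h.H.centralD)
    moreover have "comm (Q n m) D (A [^]\<^bsub>Q n m\<^esub> m) = \<one>\<^bsub>Q n m\<^esub>"
      using am Dc by (simp add: h.H.central_comm_one2)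
    ultimately have o1: "group.ord (Q n m) (comm (Q n m) D A) dvd m" using orddvd Dc AB by simp
    have E: "comm (Q n m) D (A \<otimes>\<^bsub>Q n m\<^esub> inv\<^bsub>Q n m\<^esub> B) \<in> carrier (Q n m)" using Dc AB by simp
    have o2: "group.ord (Q n m) (comm (Q n m) D (A \<otimes>\<^bsub>Q n m\<^esub> inv\<^bsub>Q n m\<^esub> B)) dvd gcd m (m choose 2)"
      using h.H.e_lemma[OF AB c1[unfolded D_def] c2[unfolded D_def] am bm] orddvd[OF E]
      by (simp add: D_def gcd_greatest)
    show ?thesis using o1 o2 e1 e2 by simp
  qed
  have P3: "group.ord (Q n m)
          (proj n m (comm (free_grp n) (comm (free_grp n) (gen i) (gen (i+1))) (comm (free_grp n) (gen (i+1)) (gen (i+2)))))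
          dvd gcd 2 m"
    if ii: "1 \<le> i" "i \<le> n - 3" for i
  proof -
    have ii2: "i \<le> n - 2" "1 \<le> i + 1" "i + 1 \<le> n - 2" using ii by auto
    have a: "gen i \<in> carrier (free_grp n)" and b: "gen (i+1) \<in> carrier (free_grp n)"
      and c: "gen (i+2) \<in> carrier (free_grp n)" using ii gc by auto
    define A where "A = proj n m (gen i)"
    define B where "B = proj n m (gen (i+1))"
    define C where "C = proj n m (gen (i+2))"
    have ABC: "A \<in> carrier (Q n m)" "B \<in> carrier (Q n m)" "C \<in> carrier (Q n m)"
      using a b c by (simp_all add: A_def B_def C_def)
    define D where "D = comm (Q n m) A B"
    define U where "U = comm (Q n m) B C"
    have DU: "D \<in> carrier (Q n m)" "U \<in> carrier (Q n m)" using ABC by (simp_all add: D_def U_def)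
    have pD: "proj n m (comm (free_grp n) (gen i) (gen (i+1))) = D"
      using a b hcomm by (simp add: A_def B_def D_def)
    have pU: "proj n m (comm (free_grp n) (gen (i+1)) (gen (i+2))) = U"
      using b c hcomm by (simp add: C_def B_def U_def)
    have pF: "proj n m (comm (free_grp n) (comm (free_grp n) (gen i) (gen (i+1))) (comm (free_grp n) (gen (i+1)) (gen (i+2))))
       = comm (Q n m) D U" using a b c hcomm pD pU by simp
    have r1: "comm (free_grp n) (gen i) (gen (i+2)) \<in> UT_relators n m" by (rule rel2) (use ii in auto)
    have h1: "group.central (Q n m) (comm (Q n m) A C)"
      using cenrel[OF r1] hcomm a c by (simp add: A_def C_def)
    have h2: "group.central (Q n m) (comm (Q n m) D A)"
      using cenrel[OF rel3[OF ii(1) ii2(1)]] hcomm a b pD by (simp add: A_def)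
    have h3: "group.central (Q n m) (comm (Q n m) D B)"
      using cenrel[OF rel4[OF ii(1) ii2(1)]] hcomm a b pD by (simp add: B_def)
    have r4: "comm (free_grp n) (comm (free_grp n) (gen (i+1)) (gen (i+2))) (gen (i+1)) \<in> UT_relators n m"
      using rel3[OF ii2(2,3), of m] by (simp add: numeral_2_eq_2)
    have r5: "comm (free_grp n) (comm (free_grp n) (gen (i+1)) (gen (i+2))) (gen (i+2)) \<in> UT_relators n m"
      using rel4[OF ii2(2,3), of m] by (simp add: numeral_2_eq_2)
    have h4: "group.central (Q n m) (comm (Q n m) U B)"
      using cenrel[OF r4] hcomm b c pU by (simp add: B_def)
    have h5: "group.central (Q n m) (comm (Q n m) U C)"
      using cenrel[OF r5] hcomm b c pU by (simp add: C_def)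
    have h6: "group.central (Q n m) (comm (Q n m) D U)"
      using cenrel[OF rel5[OF ii]] pF by simp
    have FF: "comm (Q n m) D U \<otimes>\<^bsub>Q n m\<^esub> comm (Q n m) D U = \<one>\<^bsub>Q n m\<^esub>"
      using h.H.f_square[OF ABC h1 h2[unfolded D_def] h3[unfolded D_def] h4[unfolded U_def] h5[unfolded U_def]
          h6[unfolded D_def U_def]] by (simp add: D_def U_def)
    have Fc: "comm (Q n m) D U \<in> carrier (Q n m)" using DU by simp
    have o2: "group.ord (Q n m) (comm (Q n m) D U) dvd 2"
      using orddvd[OF Fc, of 2] FF Fc by (simp add: numeral_2_eq_2)
    have um: "comm (free_grp n) (gen (i+1)) (gen (i+2)) [^]\<^bsub>free_grp n\<^esub> m \<in> UT_R n m"
      by (rule Fg.comm_pow_normal[OF Rn b c Rin[OF r4] Rin[OF r5] Rin[OF rel1]]) (use ii in auto)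
    have Um: "group.central (Q n m) (U [^]\<^bsub>Q n m\<^esub> m)"
      using cen[OF um] h.hom_nat_pow b c pU by (metis Fg.comm_closed)
    have "comm (Q n m) D (U [^]\<^bsub>Q n m\<^esub> m) = comm (Q n m) D U [^]\<^bsub>Q n m\<^esub> m"
      using h.H.comm_pow(2)[OF DU] h6 DU by (simp add: h.H.centralD)
    moreover have "comm (Q n m) D (U [^]\<^bsub>Q n m\<^esub> m) = \<one>\<^bsub>Q n m\<^esub>"
      using Um DU by (simp add: h.H.central_comm_one2)
    ultimately have om: "group.ord (Q n m) (comm (Q n m) D U) dvd m" using orddvd Fc by simp
    show ?thesis using o2 om pF by (simp add: gcd_greatest)
  qed
  show ?thesis unfolding F_def
  proof (intro conjI allI impI)
    fix i j assume "1 \<le> i \<and> i < j - 1 \<and> j - 1 \<le> n - 2"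
    then show "group.ord (Q n m) (proj n m (comm (free_grp n) (gen i) (gen j))) dvd m"
      using P1 by simp
  next
    fix i assume "1 \<le> i \<and> i \<le> n - 2"
    then have "1 \<le> i" "i \<le> n - 2" by simp_all
    note X = P2[OF this]
    show "group.ord (Q n m) (proj n m (comm (free_grp n) (comm (free_grp n) (gen i) (gen (i+1))) (gen i))) dvd m"
      using X by (rule conjunct1)
  next
    fix i assume "1 \<le> i \<and> i \<le> n - 2"
    then have "1 \<le> i" "i \<le> n - 2" by simp_all
    note X = P2[OF this]
    show "group.ord (Q n m)
          (proj n m (comm (free_grp n) (comm (free_grp n) (gen i) (gen (i+1))) (gen i \<otimes>\<^bsub>free_grp n\<^esub> inv\<^bsub>free_grp n\<^esub> gen (i+1))))
          dvd gcd m (m choose 2)"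
      using X by (rule conjunct2)
  next
    fix i assume "1 \<le> i \<and> i \<le> n - 3"
    then show "group.ord (Q n m)
          (proj n m (comm (free_grp n) (comm (free_grp n) (gen i) (gen (i+1))) (comm (free_grp n) (gen (i+1)) (gen (i+2)))))
          dvd gcd 2 m" using P3 by simp
  qed
qed

end
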